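(* In the construction described in the context, $\sum_{i=1}^{t-1}c(C_i)\le 2B\log t\le 2B\log n$.
   Context: $\log$ denotes $\log_2$; $c(F)=\sum_{f\in F}c(f)$. Setting: $G=(V,E)$ is a connected finite undirected graph (parallel edges allowed), $w:E\to\mathbb{R}_{\ge0}$ edge weights, $c:E\to\mathbb{R}_{>0}$ edge costs, $n=|V|$. For $S\subseteq V$, $C_G(S)=\{e\in E:|e\cap S|=1\}$ (complete cut; its edges cross it) and $C_G(S,W)=\{e\in C_G(S):w(e)<W\}$ (partial cut). $F\subseteq E$ is a set with $G'=G\setminus F=(V,E\setminus F)$ connected; $B=c(F)$ and $\Delta=\mathrm{MST}(G')-\mathrm{MST}(G)$ (MST weights w.r.t. $w$). Construction: let $T$ be a minimum spanning tree of $G$ and $T\cap F=\{e_1,\dots,e_{t-1}\}$, with $t\ge2$. Removing these edges splits $T$ into components with vertex sets $A_1,\dots,A_t$ (a partition of $V$). Let $G'_{cc}$ be the multigraph with vertex set $V_{cc}=\{A_1,\dots,A_t\}$ having, for every edge $\{u,v\}\in E\setminus F$ with $u\in A_i$, $v\in A_j$, an edge between $A_i$ and $A_j$ of weight $w(\{u,v\})$ (identified with the original edge). Let $T'_{cc}$ be a minimum spanning tree of $G'_{cc}$, with edges $e'_1,\dots,e'_{t-1}$ indexed so that $w(e'_1)\le\dots\le w(e'_{t-1})$ (ties broken arbitrarily). For each $i$, deleting $e'_i,e'_{i+1},\dots,e'_{t-1}$ from $T'_{cc}$ leaves a forest in which $e'_i$ joins two components $L_i,R_i\subseteq V_{cc}$.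 Counters $k(A)=0$ for all $A\in V_{cc}$ initially, and $k(S)=\max_{A\in S}k(A)$. For $i=1,\dots,t-1$ in order: set $X_i=L_i$ if $k(L_i)\le k(R_i)$, else $X_i=R_i$; then increase $k(A)$ by $1$ for every $A\in X_i$. Identifying a set of vertices of $G'_{cc}$ with the union of the corresponding vertex sets in $V$, define $C_i=C_G(X_i,w(e'_i))$. *)

theory Defs
  imports Complex_Main
begin

(* Multigraphs: vertices of type 'a, abstract edges of type 'e; ends e = (u,v)
   gives the two (unordered) endpoints of edge e; parallel edges allowed. *)

definition reach :: "('e \<Rightarrow> 'a \<times> 'a) \<Rightarrow> 'e set \<Rightarrow> 'a \<Rightarrow> 'a \<Rightarrow> bool" where
  "reach ends S = (\<lambda>u v. \<exists>e\<in>S. ends e = (u, v) \<or> ends e = (v, u))\<^sup>*\<^sup>*"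

definition connected_sub :: "'a set \<Rightarrow> ('e \<Rightarrow> 'a \<times> 'a) \<Rightarrow> 'e set \<Rightarrow> bool" where
  "connected_sub V ends S = (\<forall>u\<in>V. \<forall>v\<in>V. reach ends S u v)"

definition spanning_tree :: "'a set \<Rightarrow> ('e \<Rightarrow> 'a \<times> 'a) \<Rightarrow> 'e set \<Rightarrow> 'e set \<Rightarrow> bool" where
  "spanning_tree V ends E T =
     (T \<subseteq> E \<and> connected_sub V ends T \<and> (\<forall>e\<in>T. \<not> connected_sub V ends (T - {e})))"

definition is_mst :: "'a set \<Rightarrow> ('e \<Rightarrow> 'a \<times> 'a) \<Rightarrow> ('e \<Rightarrow> real) \<Rightarrow> 'e set \<Rightarrow> 'e set \<Rightarrow> bool" where
  "is_mst V ends w E T =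
     (spanning_tree V ends E T \<and> (\<forall>T'. spanning_tree V ends E T' \<longrightarrow> sum w T \<le> sum w T'))"

definition comp_of :: "'a set \<Rightarrow> ('e \<Rightarrow> 'a \<times> 'a) \<Rightarrow> 'e set \<Rightarrow> 'a \<Rightarrow> 'a set" where
  "comp_of V ends S x = {y \<in> V. reach ends S x y}"

definition crosses :: "('e \<Rightarrow> 'a \<times> 'a) \<Rightarrow> 'a set \<Rightarrow> 'e \<Rightarrow> bool" where
  "crosses ends S e = ((fst (ends e) \<in> S) \<noteq> (snd (ends e) \<in> S))"

definition complete_cut :: "'e set \<Rightarrow> ('e \<Rightarrow> 'a \<times> 'a) \<Rightarrow> 'a set \<Rightarrow> 'e set" where
  "complete_cut E ends S = {e \<in> E. crosses ends S e}"

definition partial_cut :: "'e set \<Rightarrow> ('e \<Rightarrow> 'a \<times> 'a) \<Rightarrow> ('e \<Rightarrow> real) \<Rightarrow> 'a set \<Rightarrow> real \<Rightarrow> 'e set" where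
  "partial_cut E ends w S W = {e \<in> complete_cut E ends S. w e < W}"

(* vertex set V_cc of the contracted graph: components of (V, T - F) *)
definition Vcc :: "'v set \<Rightarrow> ('e \<Rightarrow> 'v \<times> 'v) \<Rightarrow> 'e set \<Rightarrow> 'e set \<Rightarrow> 'v set set" where
  "Vcc V ends T F = comp_of V ends (T - F) ` V"

definition ends_cc :: "'v set \<Rightarrow> ('e \<Rightarrow> 'v \<times> 'v) \<Rightarrow> 'e set \<Rightarrow> 'e set \<Rightarrow> 'e \<Rightarrow> 'v set \<times> 'v set" where
  "ends_cc V ends T F e =
     (comp_of V ends (T - F) (fst (ends e)), comp_of V ends (T - F) (snd (ends e)))"

definition kmax :: "('a \<Rightarrow> nat) \<Rightarrow> 'a set \<Rightarrow> nat" where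
  "kmax k S = Max (k ` S)"

definition Xsel :: "('a \<Rightarrow> nat) \<Rightarrow> 'a set \<Rightarrow> 'a set \<Rightarrow> bool \<Rightarrow> 'a set" where
  "Xsel k L R b =
     (if kmax k L < kmax k R then L else if kmax k R < kmax k L then R else if b then L else R)"

(* counters before step i (0-based) *)
primrec cnt :: "(nat \<Rightarrow> 'a set) \<Rightarrow> (nat \<Rightarrow> 'a set) \<Rightarrow> (nat \<Rightarrow> bool) \<Rightarrow> nat \<Rightarrow> 'a \<Rightarrow> nat" where
  "cnt Lf Rf sel 0 = (\<lambda>A. 0)"
| "cnt Lf Rf sel (Suc i) =
     (\<lambda>A. cnt Lf Rf sel i A +
           (if A \<in> Xsel (cnt Lf Rf sel i) (Lf i) (Rf i) (sel i) then 1 else 0))"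

(* L_i, R_i (0-based i): components, in the forest formed by the first i edges of es,
   of the two endpoints of es!i *)
definition Lside :: "'a set \<Rightarrow> ('e \<Rightarrow> 'a \<times> 'a) \<Rightarrow> 'e list \<Rightarrow> nat \<Rightarrow> 'a set" where
  "Lside Vc ec es i = comp_of Vc ec (set (take i es)) (fst (ec (es ! i)))"

definition Rside :: "'a set \<Rightarrow> ('e \<Rightarrow> 'a \<times> 'a) \<Rightarrow> 'e list \<Rightarrow> nat \<Rightarrow> 'a set" where
  "Rside Vc ec es i = comp_of Vc ec (set (take i es)) (snd (ec (es ! i)))"

definition Xset :: "'v set \<Rightarrow> ('e \<Rightarrow> 'v \<times> 'v) \<Rightarrow> 'e set \<Rightarrow> 'e set \<Rightarrow> 'e list
                     \<Rightarrow> (nat \<Rightarrow> bool) \<Rightarrow> nat \<Rightarrow> 'v set set" where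
  "Xset V ends T F es sel i =
     (let Vc = Vcc V ends T F; ec = ends_cc V ends T F;
          L = Lside Vc ec es; R = Rside Vc ec es
      in Xsel (cnt L R sel i) (L i) (R i) (sel i))"

(* C_i = C_G(X_i, w(e'_i)), X_i identified with the union of its components *)
definition Ccut :: "'v set \<Rightarrow> 'e set \<Rightarrow> ('e \<Rightarrow> 'v \<times> 'v) \<Rightarrow> ('e \<Rightarrow> real) \<Rightarrow> 'e set \<Rightarrow> 'e set
                     \<Rightarrow> 'e list \<Rightarrow> (nat \<Rightarrow> bool) \<Rightarrow> nat \<Rightarrow> 'e set" where
  "Ccut V E ends w T F es sel i =
     partial_cut E ends w (\<Union> (Xset V ends T F es sel i)) (w (es ! i))"

end

theory Submission
  imports Defs
begin

lemma reach_refl: "reach ends S x x" by (simp add: reach_def)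

lemma reach_trans: "reach ends S x y \<Longrightarrow> reach ends S y z \<Longrightarrow> reach ends S x z"
  unfolding reach_def by (rule rtranclp_trans)

lemma reach_step: "e \<in> S \<Longrightarrow> ends e = (x,y) \<or> ends e = (y,x) \<Longrightarrow> reach ends S x y"
  unfolding reach_def by (rule r_into_rtranclp) blast

lemma reach_edge: "e \<in> S \<Longrightarrow> reach ends S (fst (ends e)) (snd (ends e))"
  by (rule reach_step[of e]) auto

lemma reach_sym: "reach ends S x y \<Longrightarrow> reach ends S y x"
  unfolding reach_def
proof (induction rule: rtranclp_induct)
  case base then show ?case by simp
next
  case (step y z)
  then have "(\<lambda>u v. \<exists>e\<in>S. ends e = (u, v) \<or> ends e = (v, u)) z y" by blast
  then show ?case by (rule converse_rtranclp_into_rtranclp[OF _ step.IH])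
qed

lemma reach_mono: "S \<subseteq> S' \<Longrightarrow> reach ends S x y \<Longrightarrow> reach ends S' x y"
  unfolding reach_def by (erule rtranclp_mono[THEN predicate2D, rotated]) blast

lemma reach_replace:
  assumes "reach ends S x y" "\<forall>e\<in>S. reach ends S' (fst (ends e)) (snd (ends e))"
  shows "reach ends S' x y"
  using assms(1) unfolding reach_def[of ends S]
proof (induction rule: rtranclp_induct)
  case base then show ?case by (rule reach_refl)
next
  case (step y z)
  then obtain e where e: "e \<in> S" "ends e = (y, z) \<or> ends e = (z, y)" by blast
  then have "reach ends S' y z" using assms(2) by (metis fst_conv snd_conv reach_sym)
  then show ?case using step.IH reach_trans by metis
qed

lemma reach_split:
  assumes "reach ends S a b" "ends g = (p, q)"
  shows "reach ends (S-{g}) a b \<or> (reach ends (S-{g}) a p \<and> reach ends (S-{g}) q b)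
         \<or> (reach ends (S-{g}) a q \<and> reach ends (S-{g}) p b)"
  using assms(1) unfolding reach_def[of ends S]
proof (induction rule: rtranclp_induct)
  case base then show ?case using reach_refl by metis
next
  case (step y z)
  then obtain e where e: "e \<in> S" "ends e = (y, z) \<or> ends e = (z, y)" by blast
  show ?case
  proof (cases "e = g")
    case False
    have yz: "reach ends (S-{g}) y z" by (rule reach_step[of e]) (use e False in auto)
    from step.IH show ?thesis
    proof (elim disjE conjE)
      assume h: "reach ends (S-{g}) a y"
      show ?thesis using reach_trans[OF h yz] by blast
    next
      assume h1: "reach ends (S-{g}) a p" and h2: "reach ends (S-{g}) q y"
      show ?thesis using reach_trans[OF h2 yz] h1 by blast
    next
      assume h1: "reach ends (S-{g}) a q" and h2: "reach ends (S-{g}) p y"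
      show ?thesis using reach_trans[OF h2 yz] h1 by blast
    qed
  next
    case True
    then have yz: "(y = p \<and> z = q) \<or> (y = q \<and> z = p)" using e assms(2) by auto
    have rf: "reach ends (S-{g}) p p" "reach ends (S-{g}) q q" by (rule reach_refl)+
    from step.IH show ?thesis
    proof (elim disjE conjE)
      assume h: "reach ends (S-{g}) a y"
      show ?thesis using yz h rf by blast
    next
      assume h1: "reach ends (S-{g}) a p" and h2: "reach ends (S-{g}) q y"
      show ?thesis using yz
      proof
        assume "y = p \<and> z = q"
        then have "reach ends (S-{g}) a z" using h1 h2 reach_sym reach_trans by metis
        then show ?thesis by blast
      next
        assume "y = q \<and> z = p"
        then show ?thesis using h1 by blast
      qed
    next
      assume h1: "reach ends (S-{g}) a q" and h2: "reach ends (S-{g}) p y"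
      show ?thesis using yz
      proof
        assume "y = q \<and> z = p"
        then have "reach ends (S-{g}) a z" using h1 h2 reach_sym reach_trans by metis
        then show ?thesis by blast
      next
        assume "y = p \<and> z = q"
        then show ?thesis using h1 by blast
      qed
    qed
  qed
qed

lemma reach_cross:
  assumes "reach ends S a b" "\<forall>g\<in>S. (fst (ends g) \<in> X) = (snd (ends g) \<in> X)"
  shows "(a \<in> X) = (b \<in> X)"
  using assms(1) unfolding reach_def
proof (induction rule: rtranclp_induct)
  case base then show ?case by simp
next
  case (step y z)
  then obtain e where e: "e \<in> S" "ends e = (y, z) \<or> ends e = (z, y)" by blast
  then show ?case using assms(2) step.IH by (metis fst_conv snd_conv)
qed

lemma reach_restrict0:
  assumes "reach ends S x y" "R = {g\<in>S. reach ends S x (fst (ends g))}"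
  shows "reach ends R x y"
  using assms(1) unfolding reach_def[of ends S]
proof (induction rule: rtranclp_induct)
  case base then show ?case by (rule reach_refl)
next
  case (step y z)
  then obtain e where e: "e \<in> S" "ends e = (y, z) \<or> ends e = (z, y)" by blast
  have yr: "reach ends S x y" using step.hyps(1) unfolding reach_def .
  have "reach ends S y z" by (rule reach_step[of e]) (use e in auto)
  then have xz: "reach ends S x z" by (rule reach_trans[OF yr])
  have "fst (ends e) = y \<or> fst (ends e) = z" using e(2) by auto
  then have "reach ends S x (fst (ends e))" using xz yr by (elim disjE) simp_all
  then have "e \<in> R" using e(1) assms(2) by simp
  then have "reach ends R y z"
    by (rule reach_step[of e]) (use e in simp)
  then show ?case by (rule reach_trans[OF step.IH])
qed

lemma reach_restrict:
  assumes "reach ends S x y"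
  shows "reach ends {g\<in>S. reach ends S x (fst (ends g))} x y"
  using reach_restrict0[OF assms refl] .

lemma minimal_subset:
  assumes "finite S" "P S"
  shows "\<exists>S'\<subseteq>S. P S' \<and> (\<forall>g\<in>S'. \<not> P (S' - {g}))"
  using assms
proof (induction S rule: finite_psubset_induct)
  case (psubset A)
  show ?case
  proof (cases "\<forall>g\<in>A. \<not> P (A - {g})")
    case True then show ?thesis using psubset.prems by blast
  next
    case False
    then obtain g where g: "g \<in> A" "P (A - {g})" by blast
    then have "A - {g} \<subset> A" by blast
    from psubset.IH[OF this g(2)] show ?thesis by blast
  qed
qed

lemma reach_empty: "reach ends {} x y \<Longrightarrow> x = y"
  unfolding reach_def by (induction rule: rtranclp_induct) auto

lemma conn_card:
  assumes "finite S" "\<forall>x\<in>U. \<forall>y\<in>U. reach ends S x y"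
  shows "card U \<le> card S + 1"
  using assms
proof (induction S arbitrary: U rule: finite_psubset_induct)
  case (psubset S U)
  show ?case
  proof (cases "S = {}")
    case True
    have u: "\<forall>x\<in>U. \<forall>y\<in>U. x = y"
    proof (intro ballI)
      fix x y assume "x \<in> U" "y \<in> U"
      then have "reach ends {} x y" using psubset.prems True by simp
      then show "x = y" by (rule reach_empty)
    qed
    have "card U \<le> 1"
    proof (cases "finite U")
      case True then show ?thesis using u card_le_Suc0_iff_eq[of U] by simp
    next
      case False then show ?thesis by simp
    qed
    then show ?thesis by simp
  next
    case False
    then obtain e where e: "e \<in> S" by blast
    define p where "p = fst (ends e)"
    define q where "q = snd (ends e)"
    have epq: "ends e = (p, q)" unfolding p_def q_def by simp
    define S' where "S' = S - {e}"
    show ?thesis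
    proof (cases "U = {}")
      case True then show ?thesis by simp
    next
      case False
      then obtain u0 where u0: "u0 \<in> U" by blast
      define U1 where "U1 = {x\<in>U. reach ends S' u0 x}"
      define U2 where "U2 = U - U1"
      define S1 where "S1 = {g\<in>S'. reach ends S' u0 (fst (ends g))}"
      define S2 where "S2 = S' - S1"
      have U1c: "\<forall>x\<in>U1. \<forall>y\<in>U1. reach ends S1 x y"
      proof (intro ballI)
        fix x y assume "x \<in> U1" "y \<in> U1"
        then have r1: "reach ends S' u0 x" and r2: "reach ends S' u0 y" unfolding U1_def by simp_all
        have h: "reach ends S1 u0 x" "reach ends S1 u0 y" unfolding S1_def
          using reach_restrict[OF r1] reach_restrict[OF r2] by simp_all
        show "reach ends S1 x y" by (rule reach_trans[OF reach_sym[OF h(1)] h(2)])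
      qed
      have U2s: "(reach ends S' u0 p \<and> reach ends S' q x) \<or> (reach ends S' u0 q \<and> reach ends S' p x)"
        if "x \<in> U2" for x
      proof -
        have "reach ends S u0 x" using psubset.prems u0 that unfolding U2_def by blast
        have nx: "\<not> reach ends S' u0 x" using that unfolding U2_def U1_def by simp
        from reach_split[OF \<open>reach ends S u0 x\<close> epq] nx show ?thesis unfolding S'_def by blast
      qed
      have U2c: "\<forall>x\<in>U2. \<forall>y\<in>U2. reach ends S2 x y"
      proof (intro ballI)
        fix x y assume xy: "x \<in> U2" "y \<in> U2"
        have nx: "\<not> reach ends S' u0 x" using xy unfolding U2_def U1_def by blast
        have "reach ends S' x y"
        proof -
          consider (a) "reach ends S' u0 p" "reach ends S' q x"
            | (b) "reach ends S' u0 q" "reach ends S' p x" using U2s[OF xy(1)] by blast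
          then show ?thesis
          proof cases
            case a
            consider (c) "reach ends S' u0 p" "reach ends S' q y"
              | (d) "reach ends S' u0 q" "reach ends S' p y" using U2s[OF xy(2)] by blast
            then show ?thesis
            proof cases
              case c then show ?thesis using reach_trans[OF reach_sym[OF a(2)] c(2)] by simp
            next
              case d then show ?thesis using reach_trans[OF d(1) a(2)] nx by simp
            qed
          next
            case b
            consider (c) "reach ends S' u0 p" "reach ends S' q y"
              | (d) "reach ends S' u0 q" "reach ends S' p y" using U2s[OF xy(2)] by blast
            then show ?thesis
            proof cases
              case c then show ?thesis using reach_trans[OF c(1) b(2)] nx by simp
            next
              case d then show ?thesis using reach_trans[OF reach_sym[OF b(2)] d(2)] by simp
            qed
          qed
        qed
        then have r: "reach ends {g\<in>S'. reach ends S' x (fst (ends g))} x y"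
          by (rule reach_restrict)
        have "{g\<in>S'. reach ends S' x (fst (ends g))} \<subseteq> S2"
        proof
          fix g assume g: "g \<in> {g\<in>S'. reach ends S' x (fst (ends g))}"
          have "\<not> reach ends S' u0 (fst (ends g))"
          proof
            assume "reach ends S' u0 (fst (ends g))"
            moreover have "reach ends S' (fst (ends g)) x" using g by (simp add: reach_sym)
            ultimately show False using nx reach_trans by metis
          qed
          then show "g \<in> S2" using g unfolding S2_def S1_def by blast
        qed
        then show "reach ends S2 x y" using r by (rule reach_mono)
      qed
      have "S1 \<subseteq> S - {e}" "S2 \<subseteq> S - {e}" unfolding S1_def S2_def S'_def by blast+
      then have s1: "S1 \<subset> S" "S2 \<subset> S" using e by blast+
      have c1: "card U1 \<le> card S1 + 1" using psubset.IH[OF s1(1)] U1c by blast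
      have c2: "card U2 \<le> card S2 + 1" using psubset.IH[OF s1(2)] U2c by blast
      have "U = U1 \<union> U2" unfolding U2_def U1_def by blast
      then have "card U \<le> card U1 + card U2" using card_Un_le[of U1 U2] by simp
      moreover have "card S1 + card S2 = card S'"
      proof -
        have f: "finite S'" "S1 \<subseteq> S'" unfolding S'_def S1_def using psubset.hyps by auto
        then have "finite S1" by (rule finite_subset[rotated])
        then have "card S2 = card S' - card S1" unfolding S2_def using card_Diff_subset[OF _ f(2)] by blast
        moreover have "card S1 \<le> card S'" using card_mono[OF f] .
        ultimately show ?thesis by simp
      qed
      moreover have "card S' + 1 = card S"
      proof -
        have "card S > 0" using e psubset.hyps by (auto simp: card_gt_0_iff)
        moreover have "card S' = card S - 1" unfolding S'_def using card_Diff_singleton[OF e] .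
        ultimately show ?thesis by simp
      qed
      ultimately show ?thesis using c1 c2 by linarith
    qed
  qed
qed

lemma comp_self: "x \<in> U \<Longrightarrow> x \<in> comp_of U ec S x"
  by (simp add: comp_of_def reach_refl)

lemma comp_sub: "comp_of U ec S x \<subseteq> U"
  by (auto simp: comp_of_def)

lemma comp_mono:
  assumes "S \<subseteq> S'" shows "comp_of U ec S x \<subseteq> comp_of U ec S' x"
proof
  fix y assume "y \<in> comp_of U ec S x"
  then have "y \<in> U" "reach ec S x y" by (simp_all add: comp_of_def)
  then show "y \<in> comp_of U ec S' x" using reach_mono[OF assms] by (simp add: comp_of_def)
qed

lemma comp_eq:
  assumes "B \<in> comp_of U ec S x"
  shows "comp_of U ec S B = comp_of U ec S x"
proof -
  have xb: "reach ec S x B" using assms by (simp add: comp_of_def)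
  have "reach ec S B y = reach ec S x y" for y
    using reach_trans[OF xb, of y] reach_trans[OF reach_sym[OF xb], of y] by blast
  then show ?thesis by (simp add: comp_of_def)
qed

lemma Xsel_cases:
  "(Xsel k L R b = L \<and> kmax k L \<le> kmax k R) \<or> (Xsel k L R b = R \<and> kmax k R \<le> kmax k L)"
  by (auto simp: Xsel_def)

lemma ne_ex_in: "x \<in> S \<Longrightarrow> S \<noteq> {}" by blast

lemma kmax_ge: "finite S \<Longrightarrow> A \<in> S \<Longrightarrow> k A \<le> kmax k S"
  unfolding kmax_def by simp

lemma kmax_in: assumes "finite S" "S \<noteq> {}" shows "\<exists>B\<in>S. kmax k S = k B"
proof -
  have "Max (k ` S) \<in> k ` S" using assms by (intro Max_in) auto
  then obtain B where "B \<in> S" "Max (k ` S) = k B" by blast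
  then show ?thesis unfolding kmax_def by blast
qed

lemma cnt_inv:
  fixes Vc :: "'a set" and ec :: "'e \<Rightarrow> 'a \<times> 'a"
  assumes fin: "finite Vc" and ein: "\<forall>e\<in>set es. fst (ec e) \<in> Vc \<and> snd (ec e) \<in> Vc"
    and disj: "\<forall>i<length es. Lside Vc ec es i \<inter> Rside Vc ec es i = {}"
  shows "i \<le> length es \<Longrightarrow> A \<in> Vc \<Longrightarrow>
    2 ^ cnt (Lside Vc ec es) (Rside Vc ec es) sel i A \<le> card (comp_of Vc ec (set (take i es)) A)"
proof (induction i arbitrary: A)
  case 0
  have "A \<in> comp_of Vc ec (set (take 0 es)) A" by (rule comp_self[OF "0.prems"(2)])
  moreover have "finite (comp_of Vc ec (set (take 0 es)) A)" by (rule finite_subset[OF comp_sub fin])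
  ultimately have "card (comp_of Vc ec (set (take 0 es)) A) > 0" by (auto simp: card_gt_0_iff)
  then show ?case by simp
next
  case (Suc i)
  have il: "i < length es" using Suc.prems by simp
  define L where "L = Lside Vc ec es"
  define R where "R = Rside Vc ec es"
  define k where "k = cnt L R sel i"
  define X where "X = Xsel k (L i) (R i) (sel i)"
  define a where "a = fst (ec (es ! i))"
  define b where "b = snd (ec (es ! i))"
  define Si where "Si = set (take i es)"
  define Sn where "Sn = set (take (Suc i) es)"
  have Sn: "Sn = insert (es ! i) Si" unfolding Sn_def Si_def using il
    by (simp add: take_Suc_conv_app_nth)
  have ab: "a \<in> Vc" "b \<in> Vc" using bspec[OF ein nth_mem[OF il]] unfolding a_def b_def by simp_all
  have SiSn: "Si \<subseteq> Sn" using Sn by blast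
  have Ld: "L i = comp_of Vc ec Si a" unfolding L_def Lside_def a_def Si_def ..
  have Rd: "R i = comp_of Vc ec Si b" unfolding R_def Rside_def b_def Si_def ..
  have LRV: "L i \<subseteq> Vc" "R i \<subseteq> Vc" unfolding Ld Rd by (rule comp_sub)+
  have LRdisj: "L i \<inter> R i = {}" using disj il unfolding L_def R_def by blast
  have finL: "finite (L i)" "finite (R i)" unfolding Ld Rd by (rule finite_subset[OF comp_sub fin])+
  have neL: "a \<in> L i" "b \<in> R i" unfolding Ld Rd by (rule comp_self[OF ab(1)], rule comp_self[OF ab(2)])
  have IHi: "2 ^ k B \<le> card (comp_of Vc ec Si B)" if "B \<in> Vc" for B
  proof -
    have "i \<le> length es" using il by (rule less_imp_le)
    from Suc.IH[OF this that] show ?thesis unfolding k_def L_def R_def Si_def .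
  qed
  have kL: "2 ^ kmax k (L i) \<le> card (L i)"
  proof -
    have ne: "L i \<noteq> {}" using neL(1) by (rule ne_ex_in)
    obtain B where B: "B \<in> L i" "kmax k (L i) = k B" using kmax_in[OF finL(1) ne, of k] by blast
    have BV: "B \<in> Vc" using subsetD[OF comp_sub B(1)[unfolded Ld]] .
    have ce: "comp_of Vc ec Si B = L i" unfolding Ld by (rule comp_eq[OF B(1)[unfolded Ld]])
    have "2 ^ kmax k (L i) = (2::nat) ^ k B" using B(2) by (rule arg_cong)
    also have "\<dots> \<le> card (comp_of Vc ec Si B)" by (rule IHi[OF BV])
    finally show ?thesis unfolding ce .
  qed
  have kR: "2 ^ kmax k (R i) \<le> card (R i)"
  proof -
    have ne: "R i \<noteq> {}" using neL(2) by (rule ne_ex_in)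
    obtain B where B: "B \<in> R i" "kmax k (R i) = k B" using kmax_in[OF finL(2) ne, of k] by blast
    have BV: "B \<in> Vc" using subsetD[OF comp_sub B(1)[unfolded Rd]] .
    have ce: "comp_of Vc ec Si B = R i" unfolding Rd by (rule comp_eq[OF B(1)[unfolded Rd]])
    have "2 ^ kmax k (R i) = (2::nat) ^ k B" using B(2) by (rule arg_cong)
    also have "\<dots> \<le> card (comp_of Vc ec Si B)" by (rule IHi[OF BV])
    finally show ?thesis unfolding ce .
  qed
  have cS: "cnt L R sel (Suc i) A = k A + (if A \<in> X then 1 else 0)"
    unfolding k_def X_def by simp
  have finCn: "finite (comp_of Vc ec Sn A)" by (rule finite_subset[OF comp_sub fin])
  show ?case
  proof (cases "A \<in> X")
    case False
    have "comp_of Vc ec Si A \<subseteq> comp_of Vc ec Sn A" by (rule comp_mono[OF SiSn])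
    then have "card (comp_of Vc ec Si A) \<le> card (comp_of Vc ec Sn A)" by (rule card_mono[OF finCn])
    then show ?thesis using IHi[OF Suc.prems(2)] cS False unfolding L_def R_def Sn_def by simp
  next
    case True
    have bnd: "2 ^ k A \<le> card (L i) \<and> 2 ^ k A \<le> card (R i)"
      using Xsel_cases[of k "L i" "R i" "sel i"]
    proof (elim disjE conjE)
      assume x: "Xsel k (L i) (R i) (sel i) = L i" and m: "kmax k (L i) \<le> kmax k (R i)"
      have "A \<in> L i" using True x unfolding X_def by simp
      then have h: "k A \<le> kmax k (L i)" by (rule kmax_ge[OF finL(1)])
      have "2 ^ k A \<le> (2::nat) ^ kmax k (L i)" by (rule power_increasing[OF h]) simp
      moreover have "2 ^ k A \<le> (2::nat) ^ kmax k (R i)" by (rule power_increasing[OF le_trans[OF h m]]) simp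
      ultimately have "2 ^ k A \<le> (2::nat) ^ kmax k (L i)" "2 ^ k A \<le> (2::nat) ^ kmax k (R i)" by simp_all
      then show ?thesis using kL kR by linarith
    next
      assume x: "Xsel k (L i) (R i) (sel i) = R i" and m: "kmax k (R i) \<le> kmax k (L i)"
      have "A \<in> R i" using True x unfolding X_def by simp
      then have h: "k A \<le> kmax k (R i)" by (rule kmax_ge[OF finL(2)])
      have "2 ^ k A \<le> (2::nat) ^ kmax k (R i)" by (rule power_increasing[OF h]) simp
      moreover have "2 ^ k A \<le> (2::nat) ^ kmax k (L i)" by (rule power_increasing[OF le_trans[OF h m]]) simp
      ultimately have "2 ^ k A \<le> (2::nat) ^ kmax k (L i)" "2 ^ k A \<le> (2::nat) ^ kmax k (R i)" by simp_all
      then show ?thesis using kL kR by linarith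
    qed
    have AX: "A \<in> L i \<union> R i" using True Xsel_cases[of k "L i" "R i" "sel i"] unfolding X_def by auto
    have edge: "reach ec Sn a b" unfolding a_def b_def Sn by (rule reach_edge) simp
    have fromA: "\<forall>y\<in>L i \<union> R i. reach ec Sn a y"
    proof
      fix y assume "y \<in> L i \<union> R i"
      then show "reach ec Sn a y"
      proof
        assume "y \<in> L i"
        then have "reach ec Si a y" unfolding Ld comp_of_def by simp
        then show ?thesis by (rule reach_mono[OF SiSn])
      next
        assume "y \<in> R i"
        then have "reach ec Si b y" unfolding Rd comp_of_def by simp
        then have "reach ec Sn b y" by (rule reach_mono[OF SiSn])
        then show ?thesis by (rule reach_trans[OF edge])
      qed
    qed
    have sub: "L i \<union> R i \<subseteq> comp_of Vc ec Sn A"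
    proof
      fix y assume y: "y \<in> L i \<union> R i"
      have "reach ec Sn A y" using reach_trans[OF reach_sym[OF bspec[OF fromA AX]] bspec[OF fromA y]] .
      moreover have "y \<in> Vc" using y LRV by blast
      ultimately show "y \<in> comp_of Vc ec Sn A" by (simp add: comp_of_def)
    qed
    have "card (L i) + card (R i) = card (L i \<union> R i)" using card_Un_disjoint[OF finL LRdisj] by simp
    also have "\<dots> \<le> card (comp_of Vc ec Sn A)" using card_mono[OF finCn sub] .
    finally have "2 * 2 ^ k A \<le> card (comp_of Vc ec Sn A)" using bnd by linarith
    then show ?thesis using cS True unfolding L_def R_def Sn_def by simp
  qed
qed

lemma nth_notin_take:
  assumes "distinct es" "i < length es"
  shows "es ! i \<notin> set (take i es)"
proof -
  have "es ! i \<in> set (drop i es)" using assms(2)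
    by (metis Cons_nth_drop_Suc list.set_intros(1))
  then show ?thesis using set_take_disj_set_drop_if_distinct[OF assms(1), of i i] by blast
qed

lemma tree_no_cycle:
  assumes st: "spanning_tree Vc ec Es Tc" and g: "g \<in> Tc" and sub: "Sx \<subseteq> Tc - {g}"
  shows "\<not> reach ec Sx (fst (ec g)) (snd (ec g))"
proof
  assume r: "reach ec Sx (fst (ec g)) (snd (ec g))"
  have conn: "connected_sub Vc ec Tc" and mn: "\<forall>e\<in>Tc. \<not> connected_sub Vc ec (Tc - {e})"
    using st unfolding spanning_tree_def by blast+
  have r': "reach ec (Tc - {g}) (fst (ec g)) (snd (ec g))" by (rule reach_mono[OF sub r])
  have edges: "\<forall>e\<in>Tc. reach ec (Tc - {g}) (fst (ec e)) (snd (ec e))"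
  proof
    fix e assume e: "e \<in> Tc"
    show "reach ec (Tc - {g}) (fst (ec e)) (snd (ec e))"
    proof (cases "e = g")
      case True then show ?thesis using r' by simp
    next
      case False then have "e \<in> Tc - {g}" using e by blast
      then show ?thesis by (rule reach_edge)
    qed
  qed
  have "connected_sub Vc ec (Tc - {g})"
    unfolding connected_sub_def
  proof (intro ballI)
    fix x y assume "x \<in> Vc" "y \<in> Vc"
    then have "reach ec Tc x y" using conn unfolding connected_sub_def by blast
    then show "reach ec (Tc - {g}) x y" using edges by (rule reach_replace)
  qed
  then show False using mn g by blast
qed

lemma exists_spanning_tree:
  assumes "finite S" "connected_sub Vc ec S" "S \<subseteq> Es"
  shows "\<exists>T'\<subseteq>S. spanning_tree Vc ec Es T'"
proof -
  obtain T' where "T' \<subseteq> S" "connected_sub Vc ec T'" "\<forall>g\<in>T'. \<not> connected_sub Vc ec (T' - {g})"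
    using minimal_subset[of S "connected_sub Vc ec", OF assms(1,2)] by blast
  then show ?thesis using assms(3) unfolding spanning_tree_def by blast
qed

lemma mst_cut:
  fixes Vc :: "'a set" and ec :: "'e \<Rightarrow> 'a \<times> 'a"
  assumes mst: "is_mst Vc ec w Es Tc" and fin: "finite Es" and wnn: "\<forall>e\<in>Es. 0 \<le> w e"
    and ein: "\<forall>e\<in>Es. fst (ec e) \<in> Vc \<and> snd (ec e) \<in> Vc"
    and dist: "distinct es" and setes: "set es = Tc" and srt: "sorted (map w es)"
    and il: "i < length es"
    and X: "X = comp_of Vc ec (set (take i es)) x0"
    and f: "f \<in> Es" "(fst (ec f) \<in> X) \<noteq> (snd (ec f) \<in> X)" "w f < w (es ! i)"
  shows False
proof -
  have st: "spanning_tree Vc ec Es Tc" and mstle: "\<forall>T'. spanning_tree Vc ec Es T' \<longrightarrow> sum w Tc \<le> sum w T'"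
    using mst unfolding is_mst_def by blast+
  have TcEs: "Tc \<subseteq> Es" and conn: "connected_sub Vc ec Tc"
    using st unfolding spanning_tree_def by blast+
  have finTc: "finite Tc" using finite_subset[OF TcEs fin] .
  define a where "a = fst (ec f)"
  define b where "b = snd (ec f)"
  have ab: "a \<in> Vc" "b \<in> Vc" using bspec[OF ein f(1)] unfolding a_def b_def by simp_all
  have rab: "reach ec Tc a b" using conn ab unfolding connected_sub_def by blast
  obtain S where S: "S \<subseteq> Tc" "reach ec S a b" "\<forall>g\<in>S. \<not> reach ec (S - {g}) a b"
    using minimal_subset[of Tc "\<lambda>S. reach ec S a b", OF finTc rab] by blast
  obtain g where g: "g \<in> S" "(fst (ec g) \<in> X) \<noteq> (snd (ec g) \<in> X)"
  proof -
    have "\<not> (\<forall>g\<in>S. (fst (ec g) \<in> X) = (snd (ec g) \<in> X))"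
    proof
      assume "\<forall>g\<in>S. (fst (ec g) \<in> X) = (snd (ec g) \<in> X)"
      from reach_cross[OF S(2) this] show False using f(2) unfolding a_def b_def by simp
    qed
    then show ?thesis using that by blast
  qed
  define p where "p = fst (ec g)"
  define q where "q = snd (ec g)"
  have gTc: "g \<in> Tc" using g(1) S(1) by blast
  have pq: "p \<in> Vc" "q \<in> Vc" using bspec[OF ein subsetD[OF TcEs gTc]] unfolding p_def q_def by simp_all
  have gnt: "g \<notin> set (take i es)"
  proof
    assume gt: "g \<in> set (take i es)"
    have rpq: "reach ec (set (take i es)) p q" unfolding p_def q_def using gt by (rule reach_edge)
    have "(p \<in> X) = (q \<in> X)"
    proof
      assume "p \<in> X"
      then have "reach ec (set (take i es)) x0 p" unfolding X comp_of_def by simp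
      then have "reach ec (set (take i es)) x0 q" using rpq by (rule reach_trans)
      then show "q \<in> X" unfolding X comp_of_def using pq by simp
    next
      assume "q \<in> X"
      then have "reach ec (set (take i es)) x0 q" unfolding X comp_of_def by simp
      then have "reach ec (set (take i es)) x0 p" using reach_sym[OF rpq] by (rule reach_trans)
      then show "p \<in> X" unfolding X comp_of_def using pq by simp
    qed
    then show False using g(2) unfolding p_def q_def by simp
  qed
  obtain j where j: "j < length es" "es ! j = g" using gTc setes in_set_conv_nth[of g es] by blast
  have ij: "i \<le> j"
  proof (rule ccontr)
    assume "\<not> i \<le> j"
    then have "j < i" by simp
    then have "es ! j \<in> set (take i es)" using j(1)
      by (metis in_set_conv_nth length_take min_less_iff_conj nth_take)
    then show False using gnt j(2) by simp
  qed
  have "map w es ! i \<le> map w es ! j" using sorted_nth_mono[OF srt ij] j(1) by simp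
  then have wig: "w (es ! i) \<le> w g" using il j by simp
  have wfg: "w f < w g" using f(3) wig by simp
  have nr: "\<not> reach ec (S - {g}) a b" using S(3) g(1) by blast
  have gpq: "ec g = (p, q)" unfolding p_def q_def by simp
  have sp: "(reach ec (S-{g}) a p \<and> reach ec (S-{g}) q b) \<or> (reach ec (S-{g}) a q \<and> reach ec (S-{g}) p b)"
    using reach_split[OF S(2) gpq] nr by blast
  define Tc' where "Tc' = insert f (Tc - {g})"
  have sub': "S - {g} \<subseteq> Tc'" using S(1) unfolding Tc'_def by blast
  have rab': "reach ec Tc' a b" unfolding a_def b_def Tc'_def by (rule reach_edge) simp
  have rpq': "reach ec Tc' p q"
  proof -
    from sp show ?thesis
    proof (elim disjE conjE)
      assume h1: "reach ec (S-{g}) a p" and h2: "reach ec (S-{g}) q b"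
      have "reach ec Tc' p a" using reach_sym[OF reach_mono[OF sub' h1]] .
      moreover have "reach ec Tc' b q" using reach_sym[OF reach_mono[OF sub' h2]] .
      ultimately show ?thesis using rab' reach_trans by metis
    next
      assume h1: "reach ec (S-{g}) a q" and h2: "reach ec (S-{g}) p b"
      have "reach ec Tc' q a" using reach_sym[OF reach_mono[OF sub' h1]] .
      moreover have "reach ec Tc' b p" using reach_sym[OF reach_mono[OF sub' h2]] .
      ultimately have "reach ec Tc' q p" using rab' reach_trans by metis
      then show ?thesis by (rule reach_sym)
    qed
  qed
  have edges: "\<forall>e\<in>Tc. reach ec Tc' (fst (ec e)) (snd (ec e))"
  proof
    fix e assume e: "e \<in> Tc"
    show "reach ec Tc' (fst (ec e)) (snd (ec e))"
    proof (cases "e = g")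
      case True then show ?thesis using rpq' unfolding p_def q_def by simp
    next
      case False then have "e \<in> Tc'" using e unfolding Tc'_def by blast
      then show ?thesis by (rule reach_edge)
    qed
  qed
  have conn': "connected_sub Vc ec Tc'"
    unfolding connected_sub_def
  proof (intro ballI)
    fix x y assume "x \<in> Vc" "y \<in> Vc"
    then have "reach ec Tc x y" using conn unfolding connected_sub_def by blast
    then show "reach ec Tc' x y" using edges by (rule reach_replace)
  qed
  have Tc'Es: "Tc' \<subseteq> Es" unfolding Tc'_def using f(1) TcEs by blast
  have finTc': "finite Tc'" unfolding Tc'_def using finTc by simp
  obtain T2 where T2: "T2 \<subseteq> Tc'" "spanning_tree Vc ec Es T2"
    using exists_spanning_tree[OF finTc' conn' Tc'Es] by blast
  have "sum w Tc \<le> sum w T2" using mstle T2(2) by blast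
  also have "\<dots> \<le> sum w Tc'"
  proof (rule sum_mono2[OF finTc' T2(1)])
    fix x assume "x \<in> Tc' - T2"
    then show "0 \<le> w x" using wnn Tc'Es by blast
  qed
  also have "\<dots> \<le> sum w (Tc - {g}) + w f"
  proof (cases "f \<in> Tc - {g}")
    case True
    then have "sum w Tc' = sum w (Tc - {g})" unfolding Tc'_def by (simp add: insert_absorb)
    moreover have "0 \<le> w f" using wnn f(1) by blast
    ultimately show ?thesis by simp
  next
    case False
    then have "sum w Tc' = w f + sum w (Tc - {g})" unfolding Tc'_def using finTc by simp
    then show ?thesis by simp
  qed
  also have "\<dots> = sum w Tc - w g + w f" using sum_diff1[OF finTc, of w g] gTc by simp
  finally show False using wfg by simp
qed

lemma cnt_sum:
  "real (cnt L R sel n A) = (\<Sum>i<n. if A \<in> Xsel (cnt L R sel i) (L i) (R i) (sel i) then 1 else 0)"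
  by (induction n) simp_all

theorem mainTheorem10:
  fixes V :: "'v set" and E :: "'e set" and ends :: "'e \<Rightarrow> 'v \<times> 'v"
    and w c :: "'e \<Rightarrow> real" and F T Tc :: "'e set" and es :: "'e list"
    and sel :: "nat \<Rightarrow> bool"
  assumes "finite V" and "V \<noteq> {}" and "finite E"
    and "\<forall>e\<in>E. fst (ends e) \<in> V \<and> snd (ends e) \<in> V"
    and "connected_sub V ends E"
    and "\<forall>e\<in>E. 0 \<le> w e" and "\<forall>e\<in>E. 0 < c e"
    and "F \<subseteq> E" and "connected_sub V ends (E - F)"
    and "is_mst V ends w E T"
    and "card (Vcc V ends T F) \<ge> 2"
    and "is_mst (Vcc V ends T F) (ends_cc V ends T F) w (E - F) Tc"
    and "distinct es" and "set es = Tc" and "sorted (map w es)"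
  shows "(\<Sum>i < card (Vcc V ends T F) - 1. sum c (Ccut V E ends w T F es sel i))
           \<le> 2 * sum c F * log 2 (card (Vcc V ends T F))
       \<and> 2 * sum c F * log 2 (card (Vcc V ends T F)) \<le> 2 * sum c F * log 2 (card V)"
proof -
  note finV = assms(1) and finE = assms(3) and endsV = assms(4) and wnn = assms(6)
    and cpos = assms(7) and FE = assms(8) and t2 = assms(11) and mst = assms(12)
    and dist = assms(13) and setes = assms(14) and srt = assms(15)
  define Vc where "Vc = Vcc V ends T F"
  define ec where "ec = ends_cc V ends T F"
  define comp where "comp = comp_of V ends (T - F)"
  define t where "t = card Vc"
  define n where "n = t - 1"
  define L where "L = Lside Vc ec es"
  define R where "R = Rside Vc ec es"
  define K where "K = cnt L R sel"
  define X where "X = Xset V ends T F es sel"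
  have Xeq: "X i = Xsel (K i) (L i) (R i) (sel i)" for i
    unfolding X_def Xset_def K_def L_def R_def Vc_def ec_def Let_def ..
  have Vcd: "Vc = comp ` V" unfolding Vc_def Vcc_def comp_def ..
  have finVc: "finite Vc" unfolding Vcd using finV by simp
  have ecd: "ec e = (comp (fst (ends e)), comp (snd (ends e)))" for e
    unfolding ec_def ends_cc_def comp_def ..
  have ein: "\<forall>e\<in>E - F. fst (ec e) \<in> Vc \<and> snd (ec e) \<in> Vc"
    using endsV unfolding ecd Vcd by auto
  have tV: "t \<le> card V" unfolding t_def Vcd using card_image_le[OF finV] .
  have t2': "2 \<le> t" using t2 unfolding t_def Vc_def .
  have mst': "is_mst Vc ec w (E - F) Tc" using mst unfolding Vc_def ec_def .
  have st: "spanning_tree Vc ec (E - F) Tc" using mst' unfolding is_mst_def by blast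
  have TcE: "Tc \<subseteq> E - F" and connTc: "connected_sub Vc ec Tc"
    using st unfolding spanning_tree_def by blast+
  have finTc: "finite Tc" using finite_subset[OF TcE] finE by blast
  have "card Vc \<le> card Tc + 1"
    using conn_card[OF finTc, of Vc ec] connTc unfolding connected_sub_def by blast
  moreover have "card Tc = length es" using distinct_card[OF dist] setes by simp
  ultimately have nles: "n \<le> length es" unfolding n_def t_def by simp
  have esin: "\<forall>e\<in>set es. fst (ec e) \<in> Vc \<and> snd (ec e) \<in> Vc" using ein TcE setes by blast
  have disj: "\<forall>i<length es. Lside Vc ec es i \<inter> Rside Vc ec es i = {}"
  proof (intro allI impI)
    fix i assume il: "i < length es"
    have gT: "es ! i \<in> Tc" using setes il nth_mem by blast
    have sub: "set (take i es) \<subseteq> Tc - {es ! i}"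
      using nth_notin_take[OF dist il] setes set_take_subset[of i es] by blast
    have nc: "\<not> reach ec (set (take i es)) (fst (ec (es ! i))) (snd (ec (es ! i)))"
      by (rule tree_no_cycle[OF st gT sub])
    show "Lside Vc ec es i \<inter> Rside Vc ec es i = {}"
    proof (rule ccontr)
      assume "Lside Vc ec es i \<inter> Rside Vc ec es i \<noteq> {}"
      then obtain y where y: "y \<in> Lside Vc ec es i" "y \<in> Rside Vc ec es i" by blast
      have h1: "reach ec (set (take i es)) (fst (ec (es ! i))) y"
        using y(1) unfolding Lside_def comp_of_def by simp
      have h2: "reach ec (set (take i es)) (snd (ec (es ! i))) y"
        using y(2) unfolding Rside_def comp_of_def by simp
      show False using nc reach_trans[OF h1 reach_sym[OF h2]] by simp
    qed
  qed
  have LRsub: "L i \<subseteq> Vc" "R i \<subseteq> Vc" for i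
    unfolding L_def R_def Lside_def Rside_def by (rule comp_sub)+
  have Xsub: "X i \<subseteq> Vc" for i
    unfolding Xeq using LRsub[of i] by (simp add: Xsel_def)
  have Xform: "\<exists>x0. X i = comp_of Vc ec (set (take i es)) x0" for i
    unfolding Xeq L_def R_def Lside_def Rside_def Xsel_def by auto
  have unionX: "(u \<in> \<Union> Y) = (comp u \<in> Y)" if u: "u \<in> V" and Y: "Y \<subseteq> Vc" for u Y
  proof
    assume "u \<in> \<Union> Y"
    then obtain B where B: "B \<in> Y" "u \<in> B" by blast
    then have "B \<in> comp ` V" using Y Vcd by blast
    then obtain x where x: "B = comp x" by blast
    have "comp u = comp x" unfolding comp_def by (rule comp_eq) (use B(2) x comp_def in simp)
    then show "comp u \<in> Y" using B(1) x by simp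
  next
    assume "comp u \<in> Y"
    moreover have "u \<in> comp u" unfolding comp_def by (rule comp_self[OF u])
    ultimately show "u \<in> \<Union> Y" by blast
  qed
  have kbound: "real (K n A) \<le> log 2 t" if A: "A \<in> Vc" for A
  proof -
    have "2 ^ K n A \<le> card (comp_of Vc ec (set (take n es)) A)"
      using cnt_inv[OF finVc esin disj nles A, of sel] unfolding K_def L_def R_def .
    also have "\<dots> \<le> t" unfolding t_def by (rule card_mono[OF finVc comp_sub])
    finally show ?thesis by (rule le_log2_of_power)
  qed
  have Ksum: "real (K n A) = (\<Sum>i<n. if A \<in> X i then 1 else 0)" for A
    unfolding Xeq K_def by (rule cnt_sum)
  define Au where "Au f = comp (fst (ends f))" for f
  define Av where "Av f = comp (snd (ends f))" for f
  have cutF: "f \<in> F \<and> (Au f \<in> X i \<or> Av f \<in> X i)"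
    if i: "i < n" and f: "f \<in> Ccut V E ends w T F es sel i" for i f
  proof -
    have fE: "f \<in> E" and cr: "crosses ends (\<Union> (X i)) f" and wf: "w f < w (es ! i)"
      using f unfolding Ccut_def X_def partial_cut_def complete_cut_def by simp_all
    have uv: "fst (ends f) \<in> V" "snd (ends f) \<in> V" using endsV fE by simp_all
    have e1: "(fst (ends f) \<in> \<Union> (X i)) = (Au f \<in> X i)"
      unfolding Au_def by (rule unionX[OF uv(1) Xsub[of i]])
    have e2: "(snd (ends f) \<in> \<Union> (X i)) = (Av f \<in> X i)"
      unfolding Av_def by (rule unionX[OF uv(2) Xsub[of i]])
    have "(fst (ends f) \<in> \<Union> (X i)) \<noteq> (snd (ends f) \<in> \<Union> (X i))"
      using cr unfolding crosses_def .
    then have cr': "(Au f \<in> X i) \<noteq> (Av f \<in> X i)" unfolding e1 e2 .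
    have il: "i < length es" using i nles by simp
    have "f \<in> F"
    proof (rule ccontr)
      assume nf: "f \<notin> F"
      obtain x0 where x0: "X i = comp_of Vc ec (set (take i es)) x0" using Xform by blast
      have "(fst (ec f) \<in> X i) \<noteq> (snd (ec f) \<in> X i)" using cr' unfolding ecd Au_def Av_def by simp
      moreover have "f \<in> E - F" using fE nf by simp
      moreover have "finite (E - F)" using finE by simp
      moreover have "\<forall>e\<in>E - F. 0 \<le> w e" using wnn by simp
      ultimately show False
        using mst_cut[OF mst' _ _ ein dist setes srt il x0, of f] wf by blast
    qed
    then show ?thesis using cr' by blast
  qed
  have finF: "finite F" using finite_subset[OF FE finE] .
  have cnn: "\<forall>f\<in>F. 0 \<le> c f" using cpos FE by fastforce
  have AuV: "Au f \<in> Vc" "Av f \<in> Vc" if "f \<in> F" for f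
    using endsV that FE unfolding Au_def Av_def Vcd by auto
  have step1: "sum c (Ccut V E ends w T F es sel i)
      \<le> (\<Sum>f\<in>F. c f * ((if Au f \<in> X i then 1 else 0) + (if Av f \<in> X i then 1 else 0)))"
    if i: "i < n" for i
  proof -
    have sub: "Ccut V E ends w T F es sel i \<subseteq> F" using cutF[OF i] by blast
    have "sum c (Ccut V E ends w T F es sel i) = (\<Sum>f\<in>F. if f \<in> Ccut V E ends w T F es sel i then c f else 0)"
      using sum.inter_restrict[OF finF, of c "Ccut V E ends w T F es sel i"] sub
      by (simp add: Int_absorb1)
    also have "\<dots> \<le> (\<Sum>f\<in>F. c f * ((if Au f \<in> X i then 1 else 0) + (if Av f \<in> X i then 1 else 0)))"
    proof (rule sum_mono)
      fix f assume fF: "f \<in> F"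
      show "(if f \<in> Ccut V E ends w T F es sel i then c f else 0)
          \<le> c f * ((if Au f \<in> X i then 1 else 0) + (if Av f \<in> X i then 1 else 0))"
        using cutF[OF i, of f] bspec[OF cnn fF] by auto
    qed
    finally show ?thesis .
  qed
  have "(\<Sum>i<n. sum c (Ccut V E ends w T F es sel i))
      \<le> (\<Sum>i<n. \<Sum>f\<in>F. c f * ((if Au f \<in> X i then 1 else 0) + (if Av f \<in> X i then 1 else 0)))"
    by (rule sum_mono) (use step1 in simp)
  also have "\<dots> = (\<Sum>f\<in>F. \<Sum>i<n. c f * ((if Au f \<in> X i then 1 else 0) + (if Av f \<in> X i then 1 else 0)))"
    by (rule sum.swap)
  also have "\<dots> = (\<Sum>f\<in>F. c f * (real (K n (Au f)) + real (K n (Av f))))"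
    unfolding Ksum by (simp add: sum_distrib_left sum.distrib distrib_left)
  also have "\<dots> \<le> (\<Sum>f\<in>F. c f * (2 * log 2 t))"
  proof (rule sum_mono)
    fix f assume fF: "f \<in> F"
    have "real (K n (Au f)) + real (K n (Av f)) \<le> 2 * log 2 t"
      using kbound[OF AuV(1)[OF fF]] kbound[OF AuV(2)[OF fF]] by simp
    then show "c f * (real (K n (Au f)) + real (K n (Av f))) \<le> c f * (2 * log 2 t)"
      using bspec[OF cnn fF] by (rule mult_left_mono)
  qed
  also have "\<dots> = sum c F * (2 * log 2 t)" by (rule sum_distrib_right[symmetric])
  also have "\<dots> = 2 * sum c F * log 2 t" by simp
  finally have part1: "(\<Sum>i<n. sum c (Ccut V E ends w T F es sel i)) \<le> 2 * sum c F * log 2 t" .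
  have Bnn: "0 \<le> 2 * sum c F" using sum_nonneg cnn by (simp add: sum_nonneg)
  have "log 2 t \<le> log 2 (card V)" using t2' tV by (intro log_mono) simp_all
  then have part2: "2 * sum c F * log 2 t \<le> 2 * sum c F * log 2 (card V)"
    using Bnn by (rule mult_left_mono)
  show ?thesis using part1 part2 unfolding n_def t_def Vc_def by simp
qed

end
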